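(* Let $\mathcal{A}$ be a central hyperplane arrangement in $V=\mathbb{K}^3$. Then $\mathcal{A}$ is factored if and only if it is hereditarily factored, and $\mathcal{A}$ is inductively factored if and only if it is hereditarily inductively factored.
   Context: $\mathbb{K}$ is a field; a central arrangement is a finite set of linear hyperplanes; $\Phi_\ell$ the empty arrangement in an $\ell$-dimensional space. $L(\mathcal{A})$ is the set of intersections of subsets of $\mathcal{A}$ ($V$ included); $\mathcal{A}_X=\{H\in\mathcal{A}\mid X\subseteq H\}$, $\mathcal{A}^X=\{X\cap H\mid H\in\mathcal{A}\setminus\mathcal{A}_X\}$. A partition $\pi=(\pi_1,\ldots,\pi_s)$ of $\mathcal{A}$ is nice if it is independent (for all choices $H_i\in\pi_i$, $\operatorname{codim}(H_1\cap\cdots\cap H_s)=s$) and for each $X\in L(\mathcal{A})\setminus\{V\}$ some non-empty $\pi_i\cap\mathcal{A}_X$ is a singleton; $\mathcal{A}$ is factored if it has a nice partition (the empty partition is nice for an empty arrangement). For $H_0\in\pi_1$: $\mathcal{A}'=\mathcal{A}\setminus\{H_0\}$, $\mathcal{A}''=\mathcal{A}^{H_0}$, $\pi'$ the partition of $\mathcal{A}'$ by the non-empty $\pi_i\cap\mathcal{A}'$, $\mathrm{R}:\mathcal{A}\setminus\pi_1\to\mathcal{A}''$, $H\mapsto H\cap H_0$, $\pi''=(\mathrm{R}(\pi_2),\ldots,\mathrm{R}(\pi_s))$. The class of inductively factored pairs is the smallest class of pairs $(\mathcal{A},\pi)$ containing $(\Phi_\ell,\text{empty partition})$ for all $\ell$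 and containing $(\mathcal{A},\pi)$ whenever there is $H_0\in\pi_1$ with $\mathrm{R}$ bijective and $(\mathcal{A}',\pi')$, $(\mathcal{A}'',\pi'')$ in the class; $\mathcal{A}$ is inductively factored if some $(\mathcal{A},\pi)$ is in it. $\mathcal{A}$ is hereditarily (inductively) factored if $\mathcal{A}^X$ is (inductively) factored for every $X\in L(\mathcal{A})$. *)

theory Defs
  imports "HOL-Analysis.Analysis"
begin

text \<open>An arrangement is a pair (W, A): an ambient linear subspace W of K^n and a
 finite set A of linear hyperplanes of W (subspaces of W of codimension 1 in W).
 This makes restrictions A^X (arrangements in X) expressible.\<close>

definition hyperplane_in :: "('a::field ^ 'n) set \<Rightarrow> ('a ^ 'n) set \<Rightarrow> bool" where
  "hyperplane_in W H \<longleftrightarrow> vec.subspace H \<and> H \<subseteq> W \<and> vec.dim H + 1 = vec.dim W"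

definition arrangement :: "('a::field ^ 'n) set \<Rightarrow> ('a ^ 'n) set set \<Rightarrow> bool" where
  "arrangement W A \<longleftrightarrow> vec.subspace W \<and> finite A \<and> (\<forall>H\<in>A. hyperplane_in W H)"

definition codim_in :: "('a::field ^ 'n) set \<Rightarrow> ('a ^ 'n) set \<Rightarrow> nat" where
  "codim_in W X = vec.dim W - vec.dim X"

definition intersection_lattice :: "'v set \<Rightarrow> 'v set set \<Rightarrow> 'v set set" where
  "intersection_lattice W A = {W \<inter> \<Inter>B | B. B \<subseteq> A}"

definition localization :: "'v set set \<Rightarrow> 'v set \<Rightarrow> 'v set set" where
  "localization A X = {H \<in> A. X \<subseteq> H}"

definition restriction :: "'v set set \<Rightarrow> 'v set \<Rightarrow> 'v set set" where
  "restriction A X = {X \<inter> H | H. H \<in> A - localization A X}"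

definition is_partition :: "'v set set \<Rightarrow> 'v set set list \<Rightarrow> bool" where
  "is_partition A \<pi> \<longleftrightarrow> (\<forall>b\<in>set \<pi>. b \<noteq> {}) \<and> \<Union>(set \<pi>) = A \<and>
     (\<forall>i<length \<pi>. \<forall>j<length \<pi>. i \<noteq> j \<longrightarrow> \<pi>!i \<inter> \<pi>!j = {})"

definition independent_partition :: "('a::field ^ 'n) set \<Rightarrow> ('a ^ 'n) set set list \<Rightarrow> bool" where
  "independent_partition W \<pi> \<longleftrightarrow>
     (\<forall>f. (\<forall>i<length \<pi>. f i \<in> \<pi>!i) \<longrightarrow>
          codim_in W (W \<inter> \<Inter>{f i | i. i < length \<pi>}) = length \<pi>)"

definition nice_partition :: "('a::field ^ 'n) set \<Rightarrow> ('a ^ 'n) set set \<Rightarrow> ('a ^ 'n) set set list \<Rightarrow> bool" where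
  "nice_partition W A \<pi> \<longleftrightarrow> is_partition A \<pi> \<and> independent_partition W \<pi> \<and>
     (\<forall>X \<in> intersection_lattice W A - {W}.
        \<exists>i<length \<pi>. card (\<pi>!i \<inter> localization A X) = 1)"

definition factored :: "('a::field ^ 'n) set \<Rightarrow> ('a ^ 'n) set set \<Rightarrow> bool" where
  "factored W A \<longleftrightarrow> (\<exists>\<pi>. nice_partition W A \<pi>)"

text \<open>For H0 in \<pi>_1: A' = A - {H0} (in W), A'' = A^{H0} (in H0),
 \<pi>' = nonempty blocks \<pi>_i - {H0} in order, R H = H \<inter> H0 on A - \<pi>_1,
 \<pi>'' = (R(\<pi>_2), ..., R(\<pi>_s)).\<close>
inductive ind_factored_pair :: "('a::field ^ 'n) set \<Rightarrow> ('a ^ 'n) set set \<Rightarrow> ('a ^ 'n) set set list \<Rightarrow> bool" where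
  empty: "vec.subspace W \<Longrightarrow> ind_factored_pair W {} []"
| step: "\<lbrakk> arrangement W A; is_partition A \<pi>; \<pi> \<noteq> []; H0 \<in> hd \<pi>;
           bij_betw (\<lambda>H. H \<inter> H0) (A - hd \<pi>) (restriction A H0);
           ind_factored_pair W (A - {H0}) (filter (\<lambda>b. b \<noteq> {}) (map (\<lambda>b. b - {H0}) \<pi>));
           ind_factored_pair H0 (restriction A H0) (map (\<lambda>b. (\<lambda>H. H \<inter> H0) ` b) (tl \<pi>)) \<rbrakk>
        \<Longrightarrow> ind_factored_pair W A \<pi>"

definition ind_factored :: "('a::field ^ 'n) set \<Rightarrow> ('a ^ 'n) set set \<Rightarrow> bool" where
  "ind_factored W A \<longleftrightarrow> (\<exists>\<pi>. ind_factored_pair W A \<pi>)"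

definition hered_factored :: "('a::field ^ 'n) set \<Rightarrow> ('a ^ 'n) set set \<Rightarrow> bool" where
  "hered_factored W A \<longleftrightarrow> (\<forall>X \<in> intersection_lattice W A. factored X (restriction A X))"

definition hered_ind_factored :: "('a::field ^ 'n) set \<Rightarrow> ('a ^ 'n) set set \<Rightarrow> bool" where
  "hered_ind_factored W A \<longleftrightarrow> (\<forall>X \<in> intersection_lattice W A. ind_factored X (restriction A X))"

end

theory Submission
  imports Defs
begin

lemma key:
  fixes W H X :: "('a::field ^ 'n) set"
  assumes W: "vec.subspace W" and H: "hyperplane_in W H" and X: "vec.subspace X" "X \<subseteq> W"
    and nX: "\<not> X \<subseteq> H"
  shows "vec.dim (X \<inter> H) + 1 = vec.dim X"
proof -
  from H have Hs: "vec.subspace H" "H \<subseteq> W" "vec.dim H + 1 = vec.dim W" by (auto simp: hyperplane_in_def)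
  obtain x where x: "x \<in> X" "x \<notin> H" using nX by blast
  have xnot: "x \<notin> vec.span H" using x Hs vec.span_eq_iff by blast
  have "vec.dim (insert x H) = vec.dim W" using vec.dim_insert[of x H] xnot Hs by simp
  moreover have sub: "insert x H \<subseteq> W" using x X Hs by auto
  ultimately have "vec.span (insert x H) = vec.span W" using vec.dim_eq_span[of "insert x H" W] by simp
  hence spanW: "vec.span (insert x H) = W" using W vec.span_eq_iff by blast
  have XS: "X \<subseteq> vec.span (insert x (X \<inter> H))"
  proof
    fix y assume y: "y \<in> X"
    hence "y \<in> vec.span (insert x H)" using spanW X by auto
    then obtain k where k: "y - k *s x \<in> vec.span H" using vec.span_breakdown_eq by blast
    hence "y - k *s x \<in> H" using Hs vec.span_eq_iff by blast
    moreover have "y - k *s x \<in> X" using y x X vec.subspace_diff vec.subspace_scale by blast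
    ultimately have "y - k *s x \<in> vec.span (X \<inter> H)" using vec.span_base by blast
    thus "y \<in> vec.span (insert x (X \<inter> H))" using vec.span_breakdown_eq by blast
  qed
  have "vec.span (insert x (X \<inter> H)) \<subseteq> X"
    using X x vec.span_minimal[of "insert x (X \<inter> H)" X] by auto
  hence eq: "vec.span (insert x (X \<inter> H)) = X" using XS by auto
  have xn2: "x \<notin> vec.span (X \<inter> H)"
  proof -
    have "vec.span (X \<inter> H) = X \<inter> H" by (rule vec.span_eq_iff[THEN iffD2, OF vec.subspace_inter[OF X(1) Hs(1)]])
    thus ?thesis using x by (metis Int_iff)
  qed
  have "vec.dim X = vec.dim (insert x (X \<inter> H))" using eq vec.dim_span by metis
  also have "\<dots> = vec.dim (X \<inter> H) + 1" using vec.dim_insert[of x "X \<inter> H"] xn2 by simp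
  finally show ?thesis by simp
qed

lemma hyp_sub: "hyperplane_in W H \<Longrightarrow> vec.subspace H" by (simp add: hyperplane_in_def)

lemma single_nice:
  fixes W L :: "('a::field ^ 'n) set"
  assumes W: "vec.subspace W" and L: "hyperplane_in W L"
  shows "nice_partition W {L} [{L}]"
proof -
  have LW: "L \<subseteq> W" and d: "vec.dim L + 1 = vec.dim W" using L by (auto simp: hyperplane_in_def)
  have ip: "is_partition {L} [{L}]" by (simp add: is_partition_def)
  have "independent_partition W [{L}]"
    unfolding independent_partition_def
  proof (intro allI impI)
    fix f :: "nat \<Rightarrow> _" assume "\<forall>i<length [{L}]. f i \<in> [{L}] ! i"
    hence "f 0 = L" by simp
    hence "{f i |i. i < length [{L}]} = {L}" by auto
    thus "codim_in W (W \<inter> \<Inter> {f i |i. i < length [{L}]}) = length [{L}]"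
      using LW d by (simp add: codim_in_def Int_absorb1)
  qed
  moreover have "\<forall>X\<in>intersection_lattice W {L} - {W}. \<exists>i<length [{L}]. card ([{L}] ! i \<inter> localization {L} X) = 1"
  proof
    fix X assume "X \<in> intersection_lattice W {L} - {W}"
    then obtain B where B: "B \<subseteq> {L}" "X = W \<inter> \<Inter>B" "X \<noteq> W" by (auto simp: intersection_lattice_def)
    hence "B = {L}" by auto
    hence "X = L" using B LW by auto
    hence "{L} \<inter> localization {L} X = {L}" by (auto simp: localization_def)
    thus "\<exists>i<length [{L}]. card ([{L}] ! i \<inter> localization {L} X) = 1" by auto
  qed
  ultimately show ?thesis using ip by (simp add: nice_partition_def)
qed

lemma restr_single: "restriction {L} L = {}"
  by (auto simp: restriction_def localization_def)

lemma single_ind: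
  fixes W L :: "('a::field ^ 'n) set"
  assumes W: "vec.subspace W" and L: "hyperplane_in W L"
  shows "ind_factored_pair W {L} [{L}]"
proof -
  have "ind_factored_pair W ({L} - {L}) (filter (\<lambda>b. b \<noteq> {}) (map (\<lambda>b. b - {L}) [{L}]))"
    using W by (simp add: ind_factored_pair.empty)
  moreover have "ind_factored_pair L (restriction {L} L) (map (\<lambda>b. (\<lambda>H. H \<inter> L) ` b) (tl [{L}]))"
    using hyp_sub[OF L] by (simp add: restr_single ind_factored_pair.empty)
  moreover have "arrangement W {L}" using W L by (simp add: arrangement_def)
  moreover have "is_partition {L} [{L}]" by (simp add: is_partition_def)
  moreover have "bij_betw (\<lambda>H. H \<inter> L) ({L} - hd [{L}]) (restriction {L} L)"
    by (simp add: restr_single bij_betw_def)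
  ultimately show ?thesis using ind_factored_pair.step[of W "{L}" "[{L}]" L] by auto
qed

lemma empty_nice:
  fixes W :: "('a::field ^ 'n) set"
  shows "nice_partition W {} []"
  by (simp add: nice_partition_def is_partition_def independent_partition_def codim_in_def
      intersection_lattice_def)

lemma hyp_eq:
  fixes W L M :: "('a::field ^ 'n) set"
  assumes "hyperplane_in W L" "hyperplane_in W M" "L \<subseteq> M"
  shows "L = M"
proof -
  have "vec.dim L = vec.dim M" using assms by (simp add: hyperplane_in_def)
  thus ?thesis using assms vec.subspace_dim_equal[of L M] by (simp add: hyperplane_in_def)
qed

lemma hyp_int:
  fixes W L M :: "('a::field ^ 'n) set"
  assumes W: "vec.subspace W" "vec.dim W = 2" and L: "hyperplane_in W L" and M: "hyperplane_in W M"
    and ne: "L \<noteq> M"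
  shows "L \<inter> M = {0}"
proof -
  have "\<not> L \<subseteq> M" using hyp_eq[OF L M] ne by blast
  hence "vec.dim (L \<inter> M) + 1 = vec.dim L"
    using key[OF W(1) M hyp_sub[OF L]] L by (auto simp: hyperplane_in_def)
  hence "vec.dim (L \<inter> M) = 0" using L W by (auto simp: hyperplane_in_def)
  hence "L \<inter> M \<subseteq> {0}" by simp
  moreover have "0 \<in> L \<inter> M" using hyp_sub[OF L] hyp_sub[OF M] vec.subspace_0 by blast
  ultimately show ?thesis by blast
qed

lemma pair_partition: "R \<noteq> {} \<Longrightarrow> L1 \<notin> R \<Longrightarrow> is_partition (insert L1 R) [R, {L1}]"
  unfolding is_partition_def
  apply (intro conjI)
    apply simp
   apply auto[1]
  apply (intro allI impI)
  subgoal for i j by (cases i; cases j) auto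
  done

lemma pair_nice:
  fixes W L1 :: "('a::field ^ 'n) set"
  assumes W: "vec.subspace W" "vec.dim W = 2" and hyp: "\<forall>H\<in>insert L1 R. hyperplane_in W H"
    and R: "R \<noteq> {}" "L1 \<notin> R"
  shows "nice_partition W (insert L1 R) [R, {L1}]"
proof -
  have L1: "hyperplane_in W L1" using hyp by auto
  have z1: "0 \<in> L1" using hyp_sub[OF L1] vec.subspace_0 by blast
  have "independent_partition W [R, {L1}]"
    unfolding independent_partition_def
  proof (intro allI impI)
    fix f :: "nat \<Rightarrow> _" assume f: "\<forall>i<length [R, {L1}]. f i \<in> [R, {L1}] ! i"
    hence f0: "f 0 \<in> R" and f1: "f 1 = L1" by (auto dest: spec[of _ 0] spec[of _ 1])
    have "{f i |i. i < length [R, {L1}]} = {f 0, f 1}" by (auto simp: less_Suc_eq)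
    moreover have "f 0 \<inter> L1 = {0}"
      using hyp_int[OF W _ L1] f0 hyp R by auto
    moreover have "f 0 \<subseteq> W" using f0 hyp by (auto simp: hyperplane_in_def)
    ultimately have "W \<inter> \<Inter> {f i |i. i < length [R, {L1}]} = {0}" using f1 by auto
    thus "codim_in W (W \<inter> \<Inter> {f i |i. i < length [R, {L1}]}) = length [R, {L1}]"
      using W by (simp add: codim_in_def)
  qed
  moreover have "\<forall>X\<in>intersection_lattice W (insert L1 R) - {W}. \<exists>i<length [R, {L1}].
      card ([R, {L1}] ! i \<inter> localization (insert L1 R) X) = 1"
  proof
    fix X assume "X \<in> intersection_lattice W (insert L1 R) - {W}"
    then obtain B where B: "B \<subseteq> insert L1 R" "X = W \<inter> \<Inter>B" "X \<noteq> W"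
      by (auto simp: intersection_lattice_def)
    show "\<exists>i<length [R, {L1}]. card ([R, {L1}] ! i \<inter> localization (insert L1 R) X) = 1"
    proof (cases "X \<subseteq> L1")
      case True
      hence "[R, {L1}] ! 1 \<inter> localization (insert L1 R) X = {L1}" by (auto simp: localization_def)
      thus ?thesis by (intro exI[of _ 1]) auto
    next
      case False
      from B obtain L where L: "L \<in> B" by auto
      hence XL: "X \<subseteq> L" using B by auto
      hence LR: "L \<in> R" using L B False by auto
      have "R \<inter> localization (insert L1 R) X = {L}"
      proof (rule set_eqI, rule iffI)
        fix M assume M: "M \<in> R \<inter> localization (insert L1 R) X"
        show "M \<in> {L}"
        proof (rule ccontr)
          assume "M \<notin> {L}"
          hence "L \<inter> M = {0}" using hyp_int[OF W, of L M] hyp LR M by (auto simp: localization_def)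
          hence "X \<subseteq> {0}" using XL M by (auto simp: localization_def)
          thus False using False z1 by auto
        qed
      next
        fix M assume "M \<in> {L}" thus "M \<in> R \<inter> localization (insert L1 R) X"
          using LR XL by (auto simp: localization_def)
      qed
      thus ?thesis by (intro exI[of _ 0]) auto
    qed
  qed
  ultimately show ?thesis using pair_partition[OF R] by (simp add: nice_partition_def)
qed

lemma zero_hyp:
  fixes x :: "('a::field ^ 'n) set"
  assumes "vec.subspace x" "vec.dim x = 1"
  shows "hyperplane_in x {0}"
  using assms vec.subspace_0 by (auto simp: hyperplane_in_def vec.subspace_single_0)

lemma pair_ind:
  fixes W L1 :: "('a::field ^ 'n) set"
  assumes fin: "finite R"
  shows "vec.subspace W \<Longrightarrow> vec.dim W = 2 \<Longrightarrow> \<forall>H\<in>insert L1 R. hyperplane_in W H \<Longrightarrow>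
    R \<noteq> {} \<Longrightarrow> L1 \<notin> R \<Longrightarrow> ind_factored_pair W (insert L1 R) [R, {L1}]"
  using fin
proof (induction R rule: finite_induct)
  case empty thus ?case by simp
next
  case (insert x F)
  note W = insert.prems(1,2)
  have L1: "hyperplane_in W L1" and xh: "hyperplane_in W x" using insert.prems by auto
  have x1: "x \<noteq> L1" using insert.prems by auto
  let ?A = "insert L1 (insert x F)"
  have restr: "restriction ?A x = {{0}}"
  proof (rule set_eqI, rule iffI)
    fix y assume "y \<in> restriction ?A x"
    then obtain H where H: "H \<in> ?A" "\<not> x \<subseteq> H" "y = x \<inter> H"
      by (auto simp: restriction_def localization_def)
    hence "x \<noteq> H" by auto
    hence "x \<inter> H = {0}" using hyp_int[OF W xh, of H] H insert.prems by auto
    thus "y \<in> {{0}}" using H by auto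
  next
    fix y :: "('a ^ 'n) set" assume "y \<in> {{0}}"
    moreover have "x \<inter> L1 = {0}" using hyp_int[OF W xh L1] x1 by auto
    moreover have "\<not> x \<subseteq> L1" using hyp_eq[OF xh L1] x1 by auto
    ultimately show "y \<in> restriction ?A x"
      by (auto simp: restriction_def localization_def intro!: exI[of _ L1])
  qed
  have xsub: "vec.subspace x" and dx: "vec.dim x = 1" using xh W by (auto simp: hyperplane_in_def)
  have arr: "arrangement W ?A" using insert.prems insert.hyps by (simp add: arrangement_def)
  have part: "is_partition ?A [insert x F, {L1}]" using pair_partition[of "insert x F" L1] insert.prems by auto
  have bij: "bij_betw (\<lambda>H. H \<inter> x) (?A - hd [insert x F, {L1}]) (restriction ?A x)"
  proof -
    have "?A - hd [insert x F, {L1}] = {L1}" using insert.prems by auto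
    moreover have "L1 \<inter> x = {0}" using hyp_int[OF W xh L1] x1 by auto
    ultimately show ?thesis using restr by (simp add: bij_betw_def)
  qed
  have A': "?A - {x} = insert L1 F" using insert.hyps x1 by auto
  have p': "filter (\<lambda>b. b \<noteq> {}) (map (\<lambda>b. b - {x}) [insert x F, {L1}]) = (if F = {} then [{L1}] else [F, {L1}])"
    using insert.hyps x1 by auto
  have ind1: "ind_factored_pair W (?A - {x}) (filter (\<lambda>b. b \<noteq> {}) (map (\<lambda>b. b - {x}) [insert x F, {L1}]))"
  proof (cases "F = {}")
    case True
    thus ?thesis using A' p' single_ind[OF W(1) L1] by simp
  next
    case False
    thus ?thesis using A' p' insert.IH[OF W] insert.prems by simp
  qed
  have p'': "map (\<lambda>b. (\<lambda>H. H \<inter> x) ` b) (tl [insert x F, {L1}]) = [{{0}}]"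
    using hyp_int[OF W xh L1] x1 by auto
  have ind2: "ind_factored_pair x (restriction ?A x) (map (\<lambda>b. (\<lambda>H. H \<inter> x) ` b) (tl [insert x F, {L1}]))"
    using restr p'' single_ind[OF xsub zero_hyp[OF xsub dx]] by simp
  show ?case using ind_factored_pair.step[OF arr part _ _ bij ind1 ind2] by simp
qed

lemma lowdim:
  fixes W :: "('a::field ^ 'n) set"
  assumes arr: "arrangement W A" and d: "vec.dim W \<le> 2"
  shows "factored W A \<and> ind_factored W A"
proof -
  have W: "vec.subspace W" and fin: "finite A" and hyp: "\<forall>H\<in>A. hyperplane_in W H"
    using arr by (auto simp: arrangement_def)
  show ?thesis
  proof (cases "A = {}")
    case True thus ?thesis using empty_nice[of W] W ind_factored_pair.empty[OF W]
      by (auto simp: factored_def ind_factored_def)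
  next
    case False
    then obtain L1 where L1A: "L1 \<in> A" by auto
    have L1: "hyperplane_in W L1" using hyp L1A by auto
    have single: "A = {L1} \<Longrightarrow> ?thesis" using single_nice[OF W L1] single_ind[OF W L1]
      by (auto simp: factored_def ind_factored_def)
    have "vec.dim W = 1 \<or> vec.dim W = 2" using L1 d by (auto simp: hyperplane_in_def)
    thus ?thesis
    proof
      assume d1: "vec.dim W = 1"
      have "\<forall>H\<in>A. H = {0}"
      proof
        fix H assume "H \<in> A"
        hence "vec.subspace H" "vec.dim H = 0" using hyp d1 by (auto simp: hyperplane_in_def)
        thus "H = {0}" using vec.subspace_0 by auto
      qed
      hence "A = {L1}" using L1A by auto
      thus ?thesis using single by blast
    next
      assume d2: "vec.dim W = 2"
      show ?thesis
      proof (cases "A - {L1} = {}")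
        case True thus ?thesis using single L1A by blast
      next
        case False
        have Aeq: "A = insert L1 (A - {L1})" using L1A by auto
        have h: "\<forall>H\<in>insert L1 (A - {L1}). hyperplane_in W H" using hyp L1A by auto
        show ?thesis
          using pair_nice[OF W d2 h False] pair_ind[OF _ W d2 h False] fin Aeq
          by (auto simp: factored_def ind_factored_def)
      qed
    qed
  qed
qed

lemma restr_UNIV:
  fixes A :: "('a::field ^ 'n) set set"
  assumes "arrangement UNIV A"
  shows "restriction A UNIV = A"
proof -
  have "\<forall>H\<in>A. H \<noteq> UNIV" using assms by (auto simp: arrangement_def hyperplane_in_def)
  hence "localization A UNIV = {}" by (auto simp: localization_def)
  thus ?thesis by (auto simp: restriction_def)
qed

lemma restr_low:
  fixes A :: "('a::field ^ 3) set set"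
  assumes arr: "arrangement UNIV A" and X: "X \<in> intersection_lattice UNIV A" "X \<noteq> UNIV"
  shows "arrangement X (restriction A X) \<and> vec.dim X \<le> 2"
proof -
  have fin: "finite A" and hyp: "\<forall>H\<in>A. hyperplane_in UNIV H" using arr by (auto simp: arrangement_def)
  have dU: "vec.dim (UNIV :: ('a ^ 3) set) = 3" using vec_dim_card[where 'a='a and 'n=3] by simp
  obtain B where B: "B \<subseteq> A" "X = UNIV \<inter> \<Inter>B" using X by (auto simp: intersection_lattice_def)
  have Xs: "vec.subspace X" using B hyp vec.subspace_Inter[of B] by (auto simp: hyperplane_in_def)
  obtain H where H: "H \<in> B" using B X by auto
  hence "X \<subseteq> H" using B by auto
  hence "vec.dim X \<le> vec.dim H" by (rule vec.dim_subset)
  moreover have "vec.dim H + 1 = 3" using hyp H B dU by (auto simp: hyperplane_in_def)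
  ultimately have d: "vec.dim X \<le> 2" by simp
  have "restriction A X = (\<lambda>H. X \<inter> H) ` (A - localization A X)" by (auto simp: restriction_def)
  hence "finite (restriction A X)" using fin by simp
  moreover have "\<forall>Y\<in>restriction A X. hyperplane_in X Y"
  proof
    fix Y assume "Y \<in> restriction A X"
    then obtain H where H: "H \<in> A" "\<not> X \<subseteq> H" "Y = X \<inter> H"
      by (auto simp: restriction_def localization_def)
    have "vec.dim (X \<inter> H) + 1 = vec.dim X"
      using key[OF vec.subspace_UNIV _ Xs] hyp H by auto
    thus "hyperplane_in X Y" using H Xs hyp vec.subspace_inter[OF Xs, of H]
      by (auto simp: hyperplane_in_def)
  qed
  ultimately show ?thesis using Xs d by (simp add: arrangement_def)
qed

theorem lemma3p26:
  fixes A :: "('a::field ^ 3) set set"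
  assumes "arrangement UNIV A"
  shows "(factored UNIV A \<longleftrightarrow> hered_factored UNIV A) \<and>
         (ind_factored UNIV A \<longleftrightarrow> hered_ind_factored UNIV A)"
proof -
  have U: "UNIV \<in> intersection_lattice UNIV A"
    unfolding intersection_lattice_def by (rule CollectI, rule exI[of _ "{}"]) simp
  have low: "X \<in> intersection_lattice UNIV A \<Longrightarrow> X \<noteq> UNIV \<Longrightarrow>
      factored X (restriction A X) \<and> ind_factored X (restriction A X)" for X
    using restr_low[OF assms, of X] lowdim by blast
  have r: "restriction A UNIV = A" using restr_UNIV[OF assms] .
  show ?thesis
    unfolding hered_factored_def hered_ind_factored_def
    using U low r by metis
qed

end
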